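(* Suppose a first-order method in Algorithm Class 2 is applied to the splitting reformulation (SP) of instance $\mathcal P$ from $x^{(0)}=0$, $y^{(0)}=0$, and generates $\{(x^{(t)},y^{(t)})\}_{t\ge1}$, with $x^{(t)}=(x_1^{(t)\top},\dots,x_m^{(t)\top})^\top$, $x_i^{(t)}\in\mathbb R^{\bar d}$, and $y^{(t)}=(y_1^{(t)\top},\dots,y_{3m_2-1}^{(t)\top})^\top$, $y_j^{(t)}\in\mathbb R^{\bar d}$. Then for any $\bar j\in\{2,3,\dots,\bar d\}$, $\mathrm{supp}(x_i^{(t)})\subset\{1,\dots,\bar j-1\}$ and $\mathrm{supp}(y_j^{(t)})\subset\{1,\dots,\bar j-1\}$ for all $i=1,\dots,m$, $j=1,\dots,3m_2-1$, and all $t\le 1+m(\bar j-2)/3$.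
   Context: $\mathrm{supp}(z)=\{j:[z]_j\ne0\}$. Splitting reformulation (SP) of $\min f_0(x)+\bar g(\bar Ax+\bar b)$ s.t. $Ax+b=0$: $\min_{x,y}f_0(x)+\bar g(y)$ s.t. $Ax+b=0$, $y=\bar Ax+\bar b$. Algorithm Class 2: given $(x^{(0)},y^{(0)})$, for all $t\ge1$, $x^{(t)}\in\mathrm{span}\{x^{(s)},\nabla f_0(x^{(s)}),A^\top b,A^\top Ax^{(s)},\bar A^\top\bar b,\bar A^\top\bar Ax^{(s)},\bar A^\top y^{(s)}\}_{s=0}^{t-1}$ and $y^{(t)}\in\mathrm{span}\{\xi^{(t)},\mathrm{prox}_{\eta_t\bar g}(\xi^{(t)})\}$ with $\eta_t>0$, $\xi^{(t)}\in\mathrm{span}\{\bar b,y^{(s)},\bar A\bar A^\top y^{(s)},\bar Ax^{(s)}\}_{s=0}^{t-1}$, where $\mathrm{prox}_{\eta\bar g}(y)=\arg\min_{y'}\{\bar g(y')+\frac1{2\eta}\|y'-y\|^2\}$. Instance $\mathcal P$: fix $\epsilon\in(0,1)$, $L_f>0$, integers $m_1\ge2$, $m_2\ge1$ with $m_1m_2$ even, $m=3m_1m_2$, an odd integer $\bar d\ge5$, $d=m\bar d$. Write $x=(x_1^\top,\dots,x_m^\top)^\top$, $x_i\in\mathbb R^{\bar d}$; $[z]_j$ is the $j$-th coordinate. $J_p\in\mathbb R^{(p-1)\times p}$ has $-1$ at $(k,k)$, $1$ at $(k,k+1)$, zero elsewhere. $\mathcal M=\{im_1:i=1,\dots,3m_2-1\}$,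 $\mathcal M^C=\{1,\dots,m-1\}\setminus\mathcal M$, $\bar n=(3m_2-1)\bar d$, $\bar A=mL_f(J_{\mathcal M}\otimes I_{\bar d})$, $A=mL_f(J_{\mathcal M^C}\otimes I_{\bar d})$ with $J_{\mathcal M},J_{\mathcal M^C}$ the rows of $J_m$ indexed by $\mathcal M,\mathcal M^C$; $b=0$, $\bar b=0$. Choose $\beta>(50\pi+1+\|A\|)\sqrt m\,\epsilon$; $\bar g(y)=\frac{\beta}{mL_f}\|y\|_1$ on $\mathbb R^{\bar n}$. $\Psi(u)=0$ ($u\le0$), $1-e^{-u^2}$ ($u>0$); $\Phi(v)=4\arctan v+2\pi$. For $z\in\mathbb R^{\bar d}$: $\varphi(z,1)=-\Psi(1)\Phi([z]_1)$, $\varphi(z,j)=\Psi(-[z]_{j-1})\Phi(-[z]_j)-\Psi([z]_{j-1})\Phi([z]_j)$ ($2\le j\le\bar d$); $h_i(z)=\varphi(z,1)+3\sum_{j=1}^{\lfloor\bar d/2\rfloor}\varphi(z,2j)$ for $1\le i\le m/3$, $h_i(z)=\varphi(z,1)$ for $m/3+1\le i\le 2m/3$, $h_i(z)=\varphi(z,1)+3\sum_{j=1}^{\lfloor\bar d/2\rfloor}\varphi(z,2j+1)$ for $2m/3+1\le i\le m$. $f_i(z)=\frac{300\pi\epsilon^2}{mL_f}h_i(\frac{\sqrt mL_fz}{150\pi\epsilon})$, $f_0(x)=\sum_{i=1}^mf_i(x_i)$. Instance $\mathcal P$ is $\min_xf_0(x)+\bar g(\bar Ax)$ s.t. $Ax+b=0$.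 *)

theory Defs
  imports "HOL-Analysis.Analysis"
begin

text \<open>A vector of R^n is represented as a function v :: nat => real
 with 1-based coordinates v 1, ..., v n, and v k = 0 for k = 0 and k > n.
 A matrix with nr rows and nc columns is a function M :: nat => nat => real
 (1-based entries M r c); only entries with 1 <= r <= nr, 1 <= c <= nc matter.\<close>

definition vecs :: "nat \<Rightarrow> (nat \<Rightarrow> real) set" where
  "vecs n = {v. \<forall>k. (k = 0 \<or> n < k) \<longrightarrow> v k = 0}"

definition zvec :: "nat \<Rightarrow> real" where
  "zvec = (\<lambda>_. 0)"

definition supp :: "(nat \<Rightarrow> real) \<Rightarrow> nat set" where
  "supp z = {j. z j \<noteq> 0}"

definition lspan :: "(nat \<Rightarrow> real) set \<Rightarrow> (nat \<Rightarrow> real) set" where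
  "lspan S = {v. \<exists>F c. finite F \<and> F \<subseteq> S \<and> v = (\<lambda>k. \<Sum>u\<in>F. c u * u k)}"

definition vnorm :: "nat \<Rightarrow> (nat \<Rightarrow> real) \<Rightarrow> real" where
  "vnorm n v = sqrt (\<Sum>k=1..n. (v k)\<^sup>2)"

definition mv :: "nat \<Rightarrow> nat \<Rightarrow> (nat \<Rightarrow> nat \<Rightarrow> real) \<Rightarrow> (nat \<Rightarrow> real) \<Rightarrow> (nat \<Rightarrow> real)" where
  "mv nr nc M x = (\<lambda>r. if 1 \<le> r \<and> r \<le> nr then (\<Sum>c=1..nc. M r c * x c) else 0)"

definition tr :: "(nat \<Rightarrow> nat \<Rightarrow> real) \<Rightarrow> (nat \<Rightarrow> nat \<Rightarrow> real)" where
  "tr M = (\<lambda>r c. M c r)"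

definition opnorm :: "nat \<Rightarrow> nat \<Rightarrow> (nat \<Rightarrow> nat \<Rightarrow> real) \<Rightarrow> real" where
  "opnorm nr nc M = Sup {vnorm nr (mv nr nc M x) | x. x \<in> vecs nc \<and> vnorm nc x \<le> 1}"

definition Jmat :: "nat \<Rightarrow> nat \<Rightarrow> nat \<Rightarrow> real" where
  "Jmat p k l = (if 1 \<le> k \<and> k \<le> p - 1 \<and> 1 \<le> l \<and> l \<le> p then
       (if l = k then -1 else if l = k + 1 then 1 else 0) else 0)"

definition selrows :: "nat set \<Rightarrow> (nat \<Rightarrow> nat \<Rightarrow> real) \<Rightarrow> (nat \<Rightarrow> nat \<Rightarrow> real)" where
  "selrows S M = (\<lambda>r c. if 1 \<le> r \<and> r \<le> card S then M (sorted_list_of_set S ! (r - 1)) c else 0)"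

text \<open>Kronecker product M \<otimes> I_q\<close>
definition kronI :: "nat \<Rightarrow> (nat \<Rightarrow> nat \<Rightarrow> real) \<Rightarrow> (nat \<Rightarrow> nat \<Rightarrow> real)" where
  "kronI q M = (\<lambda>r c. if 1 \<le> r \<and> 1 \<le> c then
       M ((r - 1) div q + 1) ((c - 1) div q + 1) * (if (r - 1) mod q = (c - 1) mod q then 1 else 0)
     else 0)"

definition blk :: "nat \<Rightarrow> (nat \<Rightarrow> real) \<Rightarrow> nat \<Rightarrow> (nat \<Rightarrow> real)" where
  "blk q x i = (\<lambda>j. if 1 \<le> j \<and> j \<le> q then x ((i - 1) * q + j) else 0)"

definition grad :: "nat \<Rightarrow> ((nat \<Rightarrow> real) \<Rightarrow> real) \<Rightarrow> (nat \<Rightarrow> real) \<Rightarrow> (nat \<Rightarrow> real)" where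
  "grad n f x = (\<lambda>k. if 1 \<le> k \<and> k \<le> n then deriv (\<lambda>s. f (x(k := s))) (x k) else 0)"

definition is_prox :: "nat \<Rightarrow> real \<Rightarrow> ((nat \<Rightarrow> real) \<Rightarrow> real) \<Rightarrow> (nat \<Rightarrow> real) \<Rightarrow> (nat \<Rightarrow> real) \<Rightarrow> bool" where
  "is_prox n eta g y p \<longleftrightarrow> p \<in> vecs n \<and>
     (\<forall>y'\<in>vecs n. g p + (vnorm n (\<lambda>k. p k - y k))\<^sup>2 / (2 * eta)
                   \<le> g y' + (vnorm n (\<lambda>k. y' k - y k))\<^sup>2 / (2 * eta))"

definition Psi :: "real \<Rightarrow> real" where
  "Psi u = (if u \<le> 0 then 0 else 1 - exp (- (u\<^sup>2)))"

definition Phi :: "real \<Rightarrow> real" where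
  "Phi v = 4 * arctan v + 2 * pi"

definition varphi :: "(nat \<Rightarrow> real) \<Rightarrow> nat \<Rightarrow> real" where
  "varphi z j = (if j = 1 then - Psi 1 * Phi (z 1)
     else Psi (- z (j - 1)) * Phi (- z j) - Psi (z (j - 1)) * Phi (z j))"

definition hfun :: "nat \<Rightarrow> nat \<Rightarrow> nat \<Rightarrow> (nat \<Rightarrow> real) \<Rightarrow> real" where
  "hfun m dbar i z =
     (if 1 \<le> i \<and> i \<le> m div 3 then varphi z 1 + 3 * (\<Sum>j=1..dbar div 2. varphi z (2 * j))
      else if m div 3 + 1 \<le> i \<and> i \<le> 2 * m div 3 then varphi z 1
      else varphi z 1 + 3 * (\<Sum>j=1..dbar div 2. varphi z (2 * j + 1)))"

definition ffun :: "real \<Rightarrow> real \<Rightarrow> nat \<Rightarrow> nat \<Rightarrow> nat \<Rightarrow> (nat \<Rightarrow> real) \<Rightarrow> real" where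
  "ffun eps Lf m dbar i z =
     300 * pi * eps\<^sup>2 / (real m * Lf) *
     hfun m dbar i (\<lambda>k. sqrt (real m) * Lf * z k / (150 * pi * eps))"

definition f0 :: "real \<Rightarrow> real \<Rightarrow> nat \<Rightarrow> nat \<Rightarrow> (nat \<Rightarrow> real) \<Rightarrow> real" where
  "f0 eps Lf m dbar x = (\<Sum>i=1..m. ffun eps Lf m dbar i (blk dbar x i))"

definition Mset :: "nat \<Rightarrow> nat \<Rightarrow> nat set" where
  "Mset m1 m2 = {i * m1 | i. 1 \<le> i \<and> i \<le> 3 * m2 - 1}"

definition McSet :: "nat \<Rightarrow> nat \<Rightarrow> nat set" where
  "McSet m1 m2 = {1..3 * m1 * m2 - 1} - Mset m1 m2"

text \<open>Abar = m Lf (J_M \<otimes> I_dbar), with (3 m2 - 1) dbar rows and m dbar columns\<close>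
definition Abar :: "real \<Rightarrow> nat \<Rightarrow> nat \<Rightarrow> nat \<Rightarrow> (nat \<Rightarrow> nat \<Rightarrow> real)" where
  "Abar Lf m1 m2 dbar = (\<lambda>r c. real (3 * m1 * m2) * Lf *
       kronI dbar (selrows (Mset m1 m2) (Jmat (3 * m1 * m2))) r c)"

text \<open>A = m Lf (J_{M^C} \<otimes> I_dbar), with card(M^C) dbar rows and m dbar columns\<close>
definition Amat :: "real \<Rightarrow> nat \<Rightarrow> nat \<Rightarrow> nat \<Rightarrow> (nat \<Rightarrow> nat \<Rightarrow> real)" where
  "Amat Lf m1 m2 dbar = (\<lambda>r c. real (3 * m1 * m2) * Lf *
       kronI dbar (selrows (McSet m1 m2) (Jmat (3 * m1 * m2))) r c)"

definition gbar :: "real \<Rightarrow> real \<Rightarrow> nat \<Rightarrow> nat \<Rightarrow> (nat \<Rightarrow> real) \<Rightarrow> real" where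
  "gbar beta Lf m nbar y = beta / (real m * Lf) * (\<Sum>k=1..nbar. \<bar>y k\<bar>)"

end

theory Submission
  imports Defs "HOL-Real_Asymp.Real_Asymp"
begin


lemma Psi_deriv0: "(Psi has_real_derivative 0) (at 0)"
proof -
  have L: "((\<lambda>y. (Psi y - Psi 0) / (y - 0)) \<longlongrightarrow> 0) (at_left 0)"
  proof (rule tendsto_eventually)
    show "\<forall>\<^sub>F y in at_left 0. (Psi y - Psi 0) / (y - 0) = (0::real)"
      unfolding eventually_at_left_field
      by (rule exI[of _ "-1"]) (auto simp: Psi_def)
  qed
  have R0: "((\<lambda>y::real. (1 - exp (- (y\<^sup>2))) / y) \<longlongrightarrow> 0) (at_right 0)"
    by real_asymp
  have R: "((\<lambda>y. (Psi y - Psi 0) / (y - 0)) \<longlongrightarrow> 0) (at_right 0)"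
  proof (rule Lim_transform_eventually[OF R0])
    show "\<forall>\<^sub>F y in at_right 0. (1 - exp (- (y\<^sup>2))) / y = (Psi y - Psi 0) / (y - 0)"
      unfolding eventually_at_right_field
      by (rule exI[of _ "1"]) (auto simp: Psi_def)
  qed
  show ?thesis
    unfolding has_field_derivative_iff filterlim_at_split using L R by simp
qed

lemma Psi_neg_deriv0: "((\<lambda>s. Psi (- s)) has_real_derivative 0) (at 0)"
  using Psi_deriv0 DERIV_mirror[of Psi 0 0] by simp

lemma Psi0: "Psi 0 = 0" by (simp add: Psi_def)

lemma varphi_deriv0:
  fixes u :: "nat \<Rightarrow> real"
  assumes u: "\<forall>j''>K. u j'' = 0" and K: "2 \<le> jj" "K < jj" and nj: "\<not> (j' = jj \<and> jj = Suc K)"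
  shows "((\<lambda>s. varphi (u(jj:=s)) j') has_real_derivative 0) (at 0)"
proof (cases "j' = 1")
  case True
  with K have "(\<lambda>s. varphi (u(jj:=s)) j') = (\<lambda>s. - Psi 1 * Phi (u 1))"
    by (auto simp: varphi_def)
  then show ?thesis by simp
next
  case n1: False
  show ?thesis
  proof (cases "j' - 1 = jj")
    case True
    with n1 K have "j' = Suc jj" by auto
    with u K have "u j' = 0" by auto
    with True n1 \<open>j' = Suc jj\<close> have "(\<lambda>s. varphi (u(jj:=s)) j') = (\<lambda>s. Psi (- s) * Phi 0 - Psi s * Phi 0)"
      by (auto simp: varphi_def)
    moreover have "((\<lambda>s. Psi (- s) * Phi 0 - Psi s * Phi 0) has_real_derivative 0 * Phi 0 - 0 * Phi 0) (at 0)"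
      by (intro DERIV_diff DERIV_cmult_right Psi_neg_deriv0 Psi_deriv0)
    ultimately show ?thesis by simp
  next
    case F2: False
    show ?thesis
    proof (cases "j' = jj")
      case True
      with nj K have "jj - 1 > K" by auto
      with u have "u (jj - 1) = 0" by auto
      with True n1 F2 have "(\<lambda>s. varphi (u(jj:=s)) j') = (\<lambda>s. 0)"
        by (auto simp: varphi_def Psi0)
      then show ?thesis by simp
    next
      case False
      with F2 n1 have "(\<lambda>s. varphi (u(jj:=s)) j') = (\<lambda>s. varphi u j')"
        by (auto simp: varphi_def)
      then show ?thesis by simp
    qed
  qed
qed

lemma hfun_deriv0:
  fixes u :: "nat \<Rightarrow> real"
  assumes u: "\<forall>j''>K. u j'' = 0" and K: "2 \<le> jj" "K < jj" and i: "1 \<le> i"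
    and nc: "\<not> (jj = Suc K \<and> ((even (Suc K) \<and> i \<le> m div 3) \<or> (odd (Suc K) \<and> 2 * m div 3 < i)))"
  shows "((\<lambda>s. hfun m dbar i (u(jj:=s))) has_real_derivative 0) (at 0)"
proof -
  have D: "((\<lambda>s. varphi (u(jj:=s)) j') has_real_derivative 0) (at 0)"
    if "\<not> (j' = jj \<and> jj = Suc K)" for j'
    using varphi_deriv0[OF u K that] .
  have D1: "((\<lambda>s. varphi (u(jj:=s)) 1) has_real_derivative 0) (at 0)"
    using D K by auto
  consider (a) "1 \<le> i \<and> i \<le> m div 3" | (b) "\<not> (1 \<le> i \<and> i \<le> m div 3)" "m div 3 + 1 \<le> i \<and> i \<le> 2 * m div 3"
    | (c) "\<not> (1 \<le> i \<and> i \<le> m div 3)" "\<not> (m div 3 + 1 \<le> i \<and> i \<le> 2 * m div 3)" by blast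
  then show ?thesis
  proof cases
    case a
    have "((\<lambda>s. varphi (u(jj:=s)) 1 + 3 * (\<Sum>j=1..dbar div 2. varphi (u(jj:=s)) (2 * j)))
        has_real_derivative (0 + 3 * (\<Sum>j=1..dbar div 2. 0))) (at 0)"
    proof (intro DERIV_add DERIV_cmult DERIV_sum D1)
      fix j assume "j \<in> {1..dbar div 2}"
      show "((\<lambda>s. varphi (u(jj:=s)) (2 * j)) has_real_derivative 0) (at 0)"
        using a nc by (intro D) (auto; presburger)
    qed
    moreover have "(\<lambda>s. hfun m dbar i (u(jj:=s))) = (\<lambda>s. varphi (u(jj:=s)) 1 + 3 * (\<Sum>j=1..dbar div 2. varphi (u(jj:=s)) (2 * j)))"
      by (intro ext) (simp only: hfun_def if_P[OF a])
    ultimately show ?thesis by simp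
  next
    case b
    then show ?thesis using D1 by (simp add: hfun_def)
  next
    case c
    have "((\<lambda>s. varphi (u(jj:=s)) 1 + 3 * (\<Sum>j=1..dbar div 2. varphi (u(jj:=s)) (2 * j + 1)))
        has_real_derivative (0 + 3 * (\<Sum>j=1..dbar div 2. 0))) (at 0)"
    proof (intro DERIV_add DERIV_cmult DERIV_sum D1)
      fix j assume "j \<in> {1..dbar div 2}"
      show "((\<lambda>s. varphi (u(jj:=s)) (2 * j + 1)) has_real_derivative 0) (at 0)"
        using c nc i by (intro D) (auto; presburger)
    qed
    moreover have "(\<lambda>s. hfun m dbar i (u(jj:=s))) = (\<lambda>s. varphi (u(jj:=s)) 1 + 3 * (\<Sum>j=1..dbar div 2. varphi (u(jj:=s)) (2 * j + 1)))"
      by (intro ext) (simp only: hfun_def if_not_P[OF c(1)] if_not_P[OF c(2)])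
    ultimately show ?thesis by simp
  qed
qed

lemma div_aux: "r < (q::nat) \<Longrightarrow> (a*q + r) div q = a"
  by simp

lemma blk_idx_eq:
  fixes q a b j j' :: nat
  assumes "1 \<le> j" "j \<le> q" "1 \<le> j'" "j' \<le> q" "a * q + j = b * q + j'"
  shows "a = b \<and> j = j'"
proof -
  have "(a * q + (j - 1)) div q = a" using assms(1,2) by (intro div_aux) simp
  moreover have "(b * q + (j' - 1)) div q = b" using assms(3,4) by (intro div_aux) simp
  moreover have "a * q + (j - 1) = b * q + (j' - 1)" using assms by simp
  ultimately have "a = b" by metis
  then show ?thesis using assms by simp
qed

lemma grad_zero:
  fixes v :: "nat \<Rightarrow> real"
  assumes d: "d = m * dbar" and i: "1 \<le> i" "i \<le> m" and jj: "1 \<le> jj" "jj \<le> dbar"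
    and K: "2 \<le> jj" "K < jj"
    and lv: "\<forall>j'. 1 \<le> j' \<and> j' \<le> dbar \<and> K < j' \<longrightarrow> v ((i - 1) * dbar + j') = 0"
    and nc: "\<not> (jj = Suc K \<and> ((even (Suc K) \<and> i \<le> m div 3) \<or> (odd (Suc K) \<and> 2 * m div 3 < i)))"
  shows "grad d (f0 eps Lf m dbar) v ((i - 1) * dbar + jj) = 0"
proof -
  define k where "k = (i - 1) * dbar + jj"
  have k1: "1 \<le> k" using jj by (simp add: k_def)
  have "k \<le> (i - 1) * dbar + dbar" using jj by (simp add: k_def)
  also have "\<dots> = i * dbar" using i by (cases i) auto
  also have "\<dots> \<le> d" using i d by simp
  finally have kd: "k \<le> d" .
  have vk: "v k = 0" using lv jj K by (auto simp: k_def)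
  define c where "c = sqrt (real m) * Lf / (150 * pi * eps)"
  define u where "u = (\<lambda>j. sqrt (real m) * Lf * blk dbar v i j / (150 * pi * eps))"
  have u0: "\<forall>j''>K. u j'' = 0" using lv by (auto simp: u_def blk_def)
  have T: "((\<lambda>s. ffun eps Lf m dbar i' (blk dbar (v(k:=s)) i')) has_real_derivative 0) (at 0)"
    if i': "i' \<in> {1..m}" for i'
  proof (cases "i' = i")
    case True
    have eq: "(\<lambda>s. ffun eps Lf m dbar i' (blk dbar (v(k:=s)) i')) =
      (\<lambda>s. 300 * pi * eps\<^sup>2 / (real m * Lf) * hfun m dbar i (u(jj := c * s)))"
    proof (rule ext)
      fix s
      have "(\<lambda>ka. sqrt (real m) * Lf * blk dbar (v(k := s)) i ka / (150 * pi * eps)) = u(jj := c * s)"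
      proof (rule ext)
        fix ka
        show "sqrt (real m) * Lf * blk dbar (v(k := s)) i ka / (150 * pi * eps) = (u(jj := c * s)) ka"
        proof (cases "ka = jj")
          case True then show ?thesis using jj by (simp add: blk_def k_def c_def)
        next
          case False
          have "(i - 1) * dbar + ka \<noteq> k" if "1 \<le> ka" "ka \<le> dbar"
            using blk_idx_eq[of ka dbar jj "i - 1" "i - 1"] False that jj by (auto simp: k_def)
          then show ?thesis using False by (auto simp: blk_def u_def)
        qed
      qed
      then show "ffun eps Lf m dbar i' (blk dbar (v(k:=s)) i') =
        300 * pi * eps\<^sup>2 / (real m * Lf) * hfun m dbar i (u(jj := c * s))"
        using True by (simp add: ffun_def)
    qed
    have h: "((\<lambda>t. hfun m dbar i (u(jj := t))) has_real_derivative 0) (at (c * 0))"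
      using hfun_deriv0[OF u0 K i(1) nc] by simp
    have "((\<lambda>s. hfun m dbar i (u(jj := c * s))) has_real_derivative 0 * c) (at 0)"
      by (rule DERIV_chain2[where g="\<lambda>s. c * s" and x=0, OF h]) (auto intro!: derivative_eq_intros)
    then have "((\<lambda>s. 300 * pi * eps\<^sup>2 / (real m * Lf) * hfun m dbar i (u(jj := c * s)))
       has_real_derivative 300 * pi * eps\<^sup>2 / (real m * Lf) * (0 * c)) (at 0)"
      by (rule DERIV_cmult)
    then show ?thesis using eq by simp
  next
    case False
    have "blk dbar (v(k:=s)) i' = blk dbar v i'" for s
    proof (rule ext)
      fix ka
      have "(i' - 1) * dbar + ka \<noteq> k" if "1 \<le> ka" "ka \<le> dbar"
      proof
        assume "(i' - 1) * dbar + ka = k"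
        then have "i' - 1 = i - 1" using blk_idx_eq[of ka dbar jj "i' - 1" "i - 1"] that jj by (auto simp: k_def)
        then show False using False i i' by auto
      qed
      then show "blk dbar (v(k:=s)) i' ka = blk dbar v i' ka" by (auto simp: blk_def)
    qed
    then show ?thesis by simp
  qed
  have "((\<lambda>s. f0 eps Lf m dbar (v(k:=s))) has_real_derivative (\<Sum>i'\<in>{1..m}. 0)) (at 0)"
    unfolding f0_def by (rule DERIV_sum) (use T in auto)
  then have "deriv (\<lambda>s. f0 eps Lf m dbar (v(k:=s))) (v k) = 0"
    using vk by (simp add: DERIV_imp_deriv)
  then show ?thesis using k1 kd by (simp add: grad_def k_def)
qed




lemma mod_aux: "r < (q::nat) \<Longrightarrow> (a*q + r) mod q = r"
  by simp

definition lvl :: "nat \<Rightarrow> (nat \<Rightarrow> real) \<Rightarrow> nat \<Rightarrow> nat \<Rightarrow> bool" where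
  "lvl q v i K \<longleftrightarrow> (\<forall>j. 1 \<le> j \<and> j \<le> q \<and> K < j \<longrightarrow> v ((i - 1) * q + j) = 0)"

lemma lspan_zero: "v \<in> lspan S \<Longrightarrow> (\<And>u. u \<in> S \<Longrightarrow> u k = 0) \<Longrightarrow> v k = 0"
  unfolding lspan_def by (auto intro!: sum.neutral)

lemma lspan_lvl: "v \<in> lspan S \<Longrightarrow> (\<And>u. u \<in> S \<Longrightarrow> lvl q u i K) \<Longrightarrow> lvl q v i K"
  unfolding lvl_def by (blast intro: lspan_zero)

lemma mv_zvec: "mv nr nc M zvec = zvec"
  by (auto simp: mv_def zvec_def)

lemma lvl_zvec: "lvl q zvec i K" by (simp add: lvl_def zvec_def)

lemma mv_kron_lvl:
  assumes rb: "1 \<le> rb" and H: "\<And>cb. 1 \<le> cb \<Longrightarrow> N rb cb \<noteq> 0 \<Longrightarrow> lvl q x cb K"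
  shows "lvl q (mv nr nc (\<lambda>r c. a * kronI q N r c) x) rb K"
  unfolding lvl_def
proof (intro allI impI)
  fix j assume j: "1 \<le> j \<and> j \<le> q \<and> K < j"
  let ?r = "(rb - 1) * q + j"
  have rdiv: "(?r - 1) div q = rb - 1" and rmod: "(?r - 1) mod q = j - 1"
  proof -
    have e: "?r - 1 = (rb - 1) * q + (j - 1)" using j by simp
    show "(?r - 1) div q = rb - 1" unfolding e by (rule div_aux) (use j in linarith)
    show "(?r - 1) mod q = j - 1" unfolding e by (rule mod_aux) (use j in linarith)
  qed
  have "(\<Sum>c=1..nc. a * kronI q N ?r c * x c) = 0"
  proof (rule sum.neutral, rule ballI)
    fix c assume c: "c \<in> {1..nc}"
    show "a * kronI q N ?r c * x c = 0"
    proof (cases "(c - 1) mod q = j - 1 \<and> N rb ((c - 1) div q + 1) \<noteq> 0")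
      case True
      define cb where "cb = (c - 1) div q + 1"
      have m: "(c - 1) mod q = j - 1" using True by blast
      have cbm: "cb - 1 = (c - 1) div q" by (simp add: cb_def)
      have "c - 1 = (cb - 1) * q + (j - 1)" unfolding cbm m[symmetric] by simp
      then have "c = (cb - 1) * q + j" using c j by auto
      moreover have "lvl q x cb K" using H[of cb] True rb by (simp add: cb_def)
      ultimately have "x c = 0" using j unfolding lvl_def by auto
      then show ?thesis by simp
    next
      case False
      have r1: "1 \<le> ?r" using j by simp
      have "kronI q N ?r c = 0"
        using False rdiv rmod r1 rb unfolding kronI_def by auto
      then show ?thesis by simp
    qed
  qed
  then show "mv nr nc (\<lambda>r c. a * kronI q N r c) x ?r = 0" by (simp add: mv_def)
qed

lemma tr_kron: "tr (\<lambda>r c. a * kronI q N r c) = (\<lambda>r c. a * kronI q (tr N) r c)"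
  by (auto simp: tr_def kronI_def intro!: ext)

lemma Jmat_nz: "Jmat p k l \<noteq> 0 \<Longrightarrow> 1 \<le> k \<and> k \<le> p - 1 \<and> (l = k \<or> l = k + 1) \<and> l \<le> p"
  by (auto simp: Jmat_def split: if_splits)

lemma selrows_nz:
  assumes "finite S" "selrows S M r c \<noteq> 0"
  shows "1 \<le> r \<and> r \<le> card S \<and> sorted_list_of_set S ! (r - 1) \<in> S \<and> M (sorted_list_of_set S ! (r - 1)) c \<noteq> 0"
proof -
  have r: "1 \<le> r" "r \<le> card S" using assms(2) by (auto simp: selrows_def split: if_splits)
  then have "sorted_list_of_set S ! (r - 1) \<in> set (sorted_list_of_set S)"
    by (intro nth_mem) (simp add: assms(1))
  then show ?thesis using assms r by (auto simp: selrows_def)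
qed

lemma Mset_eq: "Mset m1 m2 = set (map (\<lambda>i. i * m1) [1..<3 * m2])"
  unfolding Mset_def by force


lemma Mset_sorted:
  assumes "1 \<le> m1"
  shows "sorted_list_of_set (Mset m1 m2) = map (\<lambda>i. i * m1) [1..<3 * m2]"
proof -
  have sw: "sorted_wrt (<) (map (\<lambda>i. i * m1) [1..<3 * m2])"
    using assms by (auto simp: sorted_wrt_map sorted_wrt_iff_nth_less)
  then have "distinct (map (\<lambda>i. i * m1) [1..<3 * m2])" "sorted (map (\<lambda>i. i * m1) [1..<3 * m2])"
    using strict_sorted_iff by blast+
  then show ?thesis
    unfolding Mset_eq sorted_list_of_set_sort_remdups
    by (simp only: distinct_remdups_id sorted_sort_id)
qed

lemma Mset_nth:
  assumes "1 \<le> m1" "1 \<le> r" "r \<le> card (Mset m1 m2)"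
  shows "sorted_list_of_set (Mset m1 m2) ! (r - 1) = r * m1"
proof -
  have "card (Mset m1 m2) = 3 * m2 - 1"
    using assms(3) Mset_sorted[OF assms(1), of m2]
    by (metis diff_Suc_1 length_map length_sorted_list_of_set length_upt)
  moreover have "[1..<3*m2] ! (r - 1) = r" using nth_upt[of 1 "r-1" "3*m2"] assms calculation by simp
  ultimately show ?thesis using assms by (simp add: Mset_sorted)
qed

lemma card_Mset: "1 \<le> m1 \<Longrightarrow> card (Mset m1 m2) = 3 * m2 - 1"
  by (metis Mset_sorted diff_Suc_1 length_map length_sorted_list_of_set length_upt)

lemma finite_Mset: "finite (Mset m1 m2)" by (simp add: Mset_eq)
lemma finite_McSet: "finite (McSet m1 m2)" by (simp add: McSet_def)
lemma McSet_sub: "McSet m1 m2 \<subseteq> {1..3 * m1 * m2 - 1}" by (auto simp: McSet_def)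
lemma Mset_sub: "1 \<le> m1 \<Longrightarrow> Mset m1 m2 \<subseteq> {1..3 * m1 * m2 - 1}"
proof
  fix k assume "1 \<le> m1" "k \<in> Mset m1 m2"
  then obtain i where i: "1 \<le> i" "i \<le> 3 * m2 - 1" "k = i * m1" by (auto simp: Mset_def)
  have "i * m1 \<le> (3 * m2 - 1) * m1" using i by simp
  also have "\<dots> = 3 * m1 * m2 - m1" by (simp add: algebra_simps diff_mult_distrib)
  also have "\<dots> \<le> 3 * m1 * m2 - 1" using \<open>1 \<le> m1\<close> by simp
  finally show "k \<in> {1..3 * m1 * m2 - 1}" using i \<open>1 \<le> m1\<close> by auto
qed


lemma prox_zero:
  assumes P: "is_prox nb eta (gbar beta Lf m nb) xi p" and eta: "0 < eta"
    and c: "0 \<le> beta / (real m * Lf)" and k: "1 \<le> k" "k \<le> nb" and xk: "xi k = 0"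
  shows "p k = 0"
proof -
  define y' where "y' = p(k := 0)"
  have pv: "p \<in> vecs nb" using P by (simp add: is_prox_def)
  have yv: "y' \<in> vecs nb" using pv k by (auto simp: vecs_def y'_def)
  define C where "C = beta / (real m * Lf)"
  have ineq: "gbar beta Lf m nb p + (vnorm nb (\<lambda>j. p j - xi j))\<^sup>2 / (2 * eta)
      \<le> gbar beta Lf m nb y' + (vnorm nb (\<lambda>j. y' j - xi j))\<^sup>2 / (2 * eta)"
    using P yv by (simp add: is_prox_def)
  have fin: "finite {1..nb}" and kin: "k \<in> {1..nb}" using k by auto
  have s1: "(\<Sum>j=1..nb. \<bar>p j\<bar>) = \<bar>p k\<bar> + (\<Sum>j\<in>{1..nb} - {k}. \<bar>p j\<bar>)"
    using sum.remove[OF fin kin] .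
  have s2: "(\<Sum>j=1..nb. \<bar>y' j\<bar>) = (\<Sum>j\<in>{1..nb} - {k}. \<bar>p j\<bar>)"
    using sum.remove[OF fin kin, of "\<lambda>j. \<bar>y' j\<bar>"] by (simp add: y'_def)
  have n1: "(vnorm nb (\<lambda>j. p j - xi j))\<^sup>2 = (p k)\<^sup>2 + (\<Sum>j\<in>{1..nb} - {k}. (p j - xi j)\<^sup>2)"
    unfolding vnorm_def using sum.remove[OF fin kin, of "\<lambda>j. (p j - xi j)\<^sup>2"] xk
    by (simp add: sum_nonneg)
  have n2: "(vnorm nb (\<lambda>j. y' j - xi j))\<^sup>2 = (\<Sum>j\<in>{1..nb} - {k}. (p j - xi j)\<^sup>2)"
    unfolding vnorm_def using sum.remove[OF fin kin, of "\<lambda>j. (y' j - xi j)\<^sup>2"] xk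
    by (simp add: sum_nonneg y'_def)
  from ineq have "C * \<bar>p k\<bar> + (p k)\<^sup>2 / (2 * eta) \<le> 0"
    unfolding gbar_def C_def[symmetric] s1 s2 n1 n2 by (simp add: algebra_simps add_divide_distrib)
  moreover have "0 \<le> C * \<bar>p k\<bar>" using c unfolding C_def[symmetric] by simp
  ultimately have "(p k)\<^sup>2 / (2 * eta) \<le> 0" by linarith
  then have "(p k)\<^sup>2 \<le> 0" using eta by (simp add: divide_le_0_iff)
  then show ?thesis by simp
qed

lemma opnorm_nonneg: "0 \<le> opnorm nr nc M"
proof -
  let ?S = "{vnorm nr (mv nr nc M x) | x. x \<in> vecs nc \<and> vnorm nc x \<le> 1}"
  have z: "0 \<in> ?S"
  proof -
    have "zvec \<in> vecs nc" by (simp add: vecs_def zvec_def)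
    moreover have "vnorm nc zvec = 0" "vnorm nr (mv nr nc M zvec) = 0"
      by (auto simp: vnorm_def zvec_def mv_def)
    ultimately show ?thesis by force
  qed
  have bdd: "bdd_above ?S"
  proof (rule bdd_aboveI)
    fix v assume "v \<in> ?S"
    then obtain x where x: "x \<in> vecs nc" "vnorm nc x \<le> 1" and v: "v = vnorm nr (mv nr nc M x)" by blast
    have xc: "\<bar>x c\<bar> \<le> 1" if "c \<in> {1..nc}" for c
    proof -
      have "(x c)\<^sup>2 \<le> (\<Sum>k=1..nc. (x k)\<^sup>2)"
        using that by (intro member_le_sum) auto
      then have "sqrt ((x c)\<^sup>2) \<le> vnorm nc x" unfolding vnorm_def by (rule real_sqrt_le_mono)
      then show ?thesis using x by simp
    qed
    have "v = L2_set (mv nr nc M x) {1..nr}" by (simp add: v vnorm_def L2_set_def)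
    also have "\<dots> \<le> (\<Sum>r=1..nr. \<bar>mv nr nc M x r\<bar>)" by (rule L2_set_le_sum_abs)
    also have "\<dots> \<le> (\<Sum>r=1..nr. \<Sum>c=1..nc. \<bar>M r c\<bar>)"
    proof (rule sum_mono)
      fix r assume r: "r \<in> {1..nr}"
      have "\<bar>mv nr nc M x r\<bar> = \<bar>\<Sum>c=1..nc. M r c * x c\<bar>" using r by (simp add: mv_def)
      also have "\<dots> \<le> (\<Sum>c=1..nc. \<bar>M r c * x c\<bar>)" by (rule sum_abs)
      also have "\<dots> \<le> (\<Sum>c=1..nc. \<bar>M r c\<bar>)"
      proof (rule sum_mono)
        fix c assume "c \<in> {1..nc}"
        then have "\<bar>x c\<bar> \<le> 1" by (rule xc)
        then show "\<bar>M r c * x c\<bar> \<le> \<bar>M r c\<bar>"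
          by (simp add: abs_mult mult_left_le)
      qed
      finally show "\<bar>mv nr nc M x r\<bar> \<le> (\<Sum>c=1..nc. \<bar>M r c\<bar>)" .
    qed
    finally show "v \<le> (\<Sum>r=1..nr. \<Sum>c=1..nc. \<bar>M r c\<bar>)" .
  qed
  show ?thesis unfolding opnorm_def using cSup_upper[OF z bdd] .
qed



lemma kronT_lvl:
  assumes i: "1 \<le> i" and H: "\<And>rb. 1 \<le> rb \<Longrightarrow> N rb i \<noteq> 0 \<Longrightarrow> lvl q y rb K"
  shows "lvl q (mv nc nr (tr (\<lambda>r c. a * kronI q N r c)) y) i K"
  unfolding tr_kron by (rule mv_kron_lvl[OF i]) (use H in \<open>auto simp: tr_def\<close>)

lemma kron_TT_lvl:
  assumes S: "finite S" and i: "1 \<le> i"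
    and H: "\<And>i'. 1 \<le> i' \<Longrightarrow> i' \<le> p \<Longrightarrow> i' \<le> i + 1 \<Longrightarrow> i \<le> i' + 1 \<Longrightarrow> lvl q x i' K"
  shows "lvl q (mv nc nr (tr (\<lambda>r c. a * kronI q (selrows S (Jmat p)) r c))
                 (mv nr nc (\<lambda>r c. a * kronI q (selrows S (Jmat p)) r c) x)) i K"
proof (rule kronT_lvl[OF i])
  fix cb assume cb: "1 \<le> cb" "selrows S (Jmat p) cb i \<noteq> 0"
  show "lvl q (mv nr nc (\<lambda>r c. a * kronI q (selrows S (Jmat p)) r c) x) cb K"
  proof (rule mv_kron_lvl[OF cb(1)])
    fix cb' assume cb': "1 \<le> cb'" "selrows S (Jmat p) cb cb' \<noteq> 0"
    have A: "Jmat p (sorted_list_of_set S ! (cb - 1)) i \<noteq> 0" using selrows_nz[OF S cb(2)] by blast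
    have B: "Jmat p (sorted_list_of_set S ! (cb - 1)) cb' \<noteq> 0" using selrows_nz[OF S cb'(2)] by blast
    show "lvl q x cb' K"
      using Jmat_nz[OF A] Jmat_nz[OF B] cb' by (intro H) auto
  qed
qed

lemma Mset_nz:
  assumes m1: "1 \<le> m1" and nz: "selrows (Mset m1 m2) (Jmat p) rb cb \<noteq> 0"
  shows "1 \<le> rb \<and> rb \<le> 3 * m2 - 1 \<and> (cb = rb * m1 \<or> cb = rb * m1 + 1)"
proof -
  have h: "1 \<le> rb \<and> rb \<le> card (Mset m1 m2) \<and> Jmat p (sorted_list_of_set (Mset m1 m2) ! (rb - 1)) cb \<noteq> 0"
    using selrows_nz[OF finite_Mset nz] by blast
  then have "sorted_list_of_set (Mset m1 m2) ! (rb - 1) = rb * m1" using Mset_nth[OF m1] by blast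
  then show ?thesis using h Jmat_nz[of p "rb * m1" cb] card_Mset[OF m1, of m2] by auto
qed

lemma blk_unique:
  fixes a b m1 :: nat
  assumes "2 \<le> m1" "c = a * m1 \<or> c = a * m1 + 1" "c = b * m1 \<or> c = b * m1 + 1"
  shows "a = b"
proof (rule ccontr)
  assume "a \<noteq> b"
  then consider "a < b" | "b < a" by linarith
  then show False
  proof cases
    case 1
    then have "(a + 1) * m1 \<le> b * m1" by (intro mult_le_mono1) simp
    then show False using assms by (auto simp: algebra_simps)
  next
    case 2
    then have "(b + 1) * m1 \<le> a * m1" by (intro mult_le_mono1) simp
    then show False using assms by (auto simp: algebra_simps)
  qed
qed

definition Tf :: "nat \<Rightarrow> nat \<Rightarrow> nat \<Rightarrow> nat" where
  "Tf n K i = (if K = 0 then 0 else 1 + n * (K - 1) + (if odd K then i - n else (2 * n + 1) - i))"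

lemma Tf_lip: "i \<le> i' + 1 \<Longrightarrow> i' \<le> i + 1 \<Longrightarrow> Tf n K i \<le> Tf n K i' + 1"
  by (auto simp: Tf_def)

lemma Tf_low: "1 \<le> K \<Longrightarrow> 1 + n * (K - 1) \<le> Tf n K i"
  by (auto simp: Tf_def)

lemma Tf_creat:
  assumes K: "1 \<le> K" and cr: "(even (Suc K) \<and> i \<le> n) \<or> (odd (Suc K) \<and> 2 * n < i)"
  shows "Tf n K i \<le> Tf n (K - 1) i + 1"
proof (cases "K = 1")
  case True
  then show ?thesis using cr by (simp add: Tf_def)
next
  case False
  then obtain k where k: "K = Suc (Suc k)" using K by (metis One_nat_def Suc_le_D le_SucE le_zero_eq)
  have e1: "n * (K - 1) = n * k + n" by (simp add: k)
  have e2: "n * (K - 1 - 1) = n * k" by (simp add: k)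
  show ?thesis using cr unfolding Tf_def e1 e2 by (auto simp: k)
qed

theorem proposition4:
  fixes eps Lf beta :: real
    and m1 m2 m dbar d nbar nA :: nat
    and x y :: "nat \<Rightarrow> nat \<Rightarrow> real"
  assumes eps: "0 < eps" "eps < 1"
    and Lf: "0 < Lf"
    and m1: "2 \<le> m1" and m2: "1 \<le> m2" and ev: "even (m1 * m2)"
    and m_def: "m = 3 * m1 * m2"
    and dbar: "odd dbar" "5 \<le> dbar"
    and d_def: "d = m * dbar"
    and nbar_def: "nbar = (3 * m2 - 1) * dbar"
    and nA_def: "nA = card (McSet m1 m2) * dbar"
    and beta: "beta > (50 * pi + 1 + opnorm nA d (Amat Lf m1 m2 dbar)) * sqrt (real m) * eps"
    and x0: "x 0 = zvec" and y0: "y 0 = zvec"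
    and xstep: "\<And>t. 1 \<le> t \<Longrightarrow> x t \<in> lspan (\<Union>s<t.
        {x s,
         grad d (f0 eps Lf m dbar) (x s),
         mv d nA (tr (Amat Lf m1 m2 dbar)) zvec,
         mv d nA (tr (Amat Lf m1 m2 dbar)) (mv nA d (Amat Lf m1 m2 dbar) (x s)),
         mv d nbar (tr (Abar Lf m1 m2 dbar)) zvec,
         mv d nbar (tr (Abar Lf m1 m2 dbar)) (mv nbar d (Abar Lf m1 m2 dbar) (x s)),
         mv d nbar (tr (Abar Lf m1 m2 dbar)) (y s)})"
    and ystep: "\<And>t. 1 \<le> t \<Longrightarrow> \<exists>eta > 0. \<exists>xi p.
        xi \<in> lspan (\<Union>s<t.
          {zvec,
           y s,
           mv nbar d (Abar Lf m1 m2 dbar) (mv d nbar (tr (Abar Lf m1 m2 dbar)) (y s)),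
           mv nbar d (Abar Lf m1 m2 dbar) (x s)})
        \<and> is_prox nbar eta (gbar beta Lf m nbar) xi p
        \<and> y t \<in> lspan {xi, p}"
  shows "\<forall>jb \<in> {2..dbar}. \<forall>t. real t \<le> 1 + real m * (real jb - 2) / 3 \<longrightarrow>
           (\<forall>i \<in> {1..m}. supp (blk dbar (x t) i) \<subseteq> {1..jb - 1}) \<and>
           (\<forall>j \<in> {1..3 * m2 - 1}. supp (blk dbar (y t) j) \<subseteq> {1..jb - 1})"
  proof -
  define n where "n = m1 * m2"
  have m3: "m = 3 * n" using m_def by (simp add: n_def)
  have n1: "1 \<le> n" using m1 m2 by (simp add: n_def)
  have md3: "m div 3 = n" and m2d3: "2 * m div 3 = 2 * n" using m3 by auto
  have m1': "1 \<le> m1" using m1 by simp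
  define a where "a = real (3 * m1 * m2) * Lf"
  define NA where "NA = selrows (McSet m1 m2) (Jmat (3 * m1 * m2))"
  define NB where "NB = selrows (Mset m1 m2) (Jmat (3 * m1 * m2))"
  have Aeq: "Amat Lf m1 m2 dbar = (\<lambda>r c. a * kronI dbar NA r c)"
    by (simp add: Amat_def a_def NA_def)
  have Beq: "Abar Lf m1 m2 dbar = (\<lambda>r c. a * kronI dbar NB r c)"
    by (simp add: Abar_def a_def NB_def)
  have jm1: "j * m1 + 1 \<le> m" if "j \<le> 3 * m2 - 1" for j
  proof -
    have "j * m1 \<le> (3 * m2 - 1) * m1" using that by simp
    also have "\<dots> = 3 * m1 * m2 - m1" by (simp add: algebra_simps diff_mult_distrib)
    finally have "j * m1 \<le> 3 * m1 * m2 - m1" .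
    moreover have "m1 \<le> 3 * m1 * m2" using m2 by simp
    ultimately show ?thesis using m1 m_def by linarith
  qed
  have opn: "0 \<le> opnorm nA d (Amat Lf m1 m2 dbar)" by (rule opnorm_nonneg)
  have p50: "0 < 50 * pi + 1 + opnorm nA d (Amat Lf m1 m2 dbar)" using opn pi_gt_zero by linarith
  have "0 < (50 * pi + 1 + opnorm nA d (Amat Lf m1 m2 dbar)) * sqrt (real m) * eps"
    using p50 eps n1 m3 by (intro mult_pos_pos) auto
  then have bpos: "0 < beta" using beta by linarith
  have cnn: "0 \<le> beta / (real m * Lf)" using bpos Lf by simp
  define Ty where "Ty K j = min (Tf n K (j * m1)) (Tf n K (j * m1 + 1))" for K j
  have main: "(\<forall>K i. 1 \<le> i \<and> i \<le> m \<and> t \<le> Tf n K i \<longrightarrow> lvl dbar (x t) i K) \<and>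
     (\<forall>K j. 1 \<le> j \<and> j \<le> 3 * m2 - 1 \<and> t \<le> Ty K j \<longrightarrow> lvl dbar (y t) j K)" for t
  proof (induction t rule: less_induct)
    case (less t)
    show ?case
    proof (cases "t = 0")
      case True
      then show ?thesis using x0 y0 lvl_zvec by simp
    next
      case False
      then have t1: "1 \<le> t" by simp
      have IHx: "lvl dbar (x s) i K" if "s < t" "1 \<le> i" "i \<le> m" "s \<le> Tf n K i" for s K i
        using less.IH[OF that(1)] that by blast
      have IHy: "lvl dbar (y s) j K" if "s < t" "1 \<le> j" "j \<le> 3 * m2 - 1" "s \<le> Ty K j" for s K j
        using less.IH[OF that(1)] that by blast
      have X: "lvl dbar (x t) i K" if i: "1 \<le> i" "i \<le> m" and tT: "t \<le> Tf n K i" for K i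
      proof -
        have K1: "1 \<le> K" using tT t1 by (cases K) (auto simp: Tf_def)
        show ?thesis
        proof (rule lspan_lvl[OF xstep[OF t1]])
          fix u assume "u \<in> (\<Union>s<t. {x s,
            grad d (f0 eps Lf m dbar) (x s),
            mv d nA (tr (Amat Lf m1 m2 dbar)) zvec,
            mv d nA (tr (Amat Lf m1 m2 dbar)) (mv nA d (Amat Lf m1 m2 dbar) (x s)),
            mv d nbar (tr (Abar Lf m1 m2 dbar)) zvec,
            mv d nbar (tr (Abar Lf m1 m2 dbar)) (mv nbar d (Abar Lf m1 m2 dbar) (x s)),
            mv d nbar (tr (Abar Lf m1 m2 dbar)) (y s)})"
          then obtain s where s: "s < t" and u: "u \<in> {x s,
            grad d (f0 eps Lf m dbar) (x s),
            mv d nA (tr (Amat Lf m1 m2 dbar)) zvec,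
            mv d nA (tr (Amat Lf m1 m2 dbar)) (mv nA d (Amat Lf m1 m2 dbar) (x s)),
            mv d nbar (tr (Abar Lf m1 m2 dbar)) zvec,
            mv d nbar (tr (Abar Lf m1 m2 dbar)) (mv nbar d (Abar Lf m1 m2 dbar) (x s)),
            mv d nbar (tr (Abar Lf m1 m2 dbar)) (y s)}" by blast
          have sT: "s + 1 \<le> Tf n K i" using s tT by linarith
          have nb: "lvl dbar (x s) i' K" if "1 \<le> i'" "i' \<le> m" "i' \<le> i + 1" "i \<le> i' + 1" for i'
          proof -
            have "s \<le> Tf n K i'" using Tf_lip[OF that(4,3), of n K] sT by linarith
            then show ?thesis by (rule IHx[OF s that(1,2)])
          qed
          have G: "lvl dbar (grad d (f0 eps Lf m dbar) (x s)) i K"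
            unfolding lvl_def
          proof (intro allI impI)
            fix jj assume jj: "1 \<le> jj \<and> jj \<le> dbar \<and> K < jj"
            show "grad d (f0 eps Lf m dbar) (x s) ((i - 1) * dbar + jj) = 0"
            proof (cases "(even (Suc K) \<and> i \<le> n) \<or> (odd (Suc K) \<and> 2 * n < i)")
              case True
              have "s \<le> Tf n (K - 1) i" using Tf_creat[OF K1 True] sT by linarith
              then have lv: "lvl dbar (x s) i (K - 1)" by (rule IHx[OF s i])
              show ?thesis
                by (rule grad_zero[OF d_def i]) (use jj K1 lv in \<open>auto simp: lvl_def\<close>)
            next
              case False
              have "s \<le> Tf n K i" using sT by linarith
              then have lv: "lvl dbar (x s) i K" by (rule IHx[OF s i])
              show ?thesis
                by (rule grad_zero[OF d_def i]) (use jj K1 lv False in \<open>auto simp: lvl_def md3 m2d3\<close>)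
            qed
          qed
          from u show "lvl dbar u i K"
          proof (elim insertE emptyE)
            assume "u = x s"
            have "s \<le> Tf n K i" using sT by linarith
            then show ?thesis using IHx[OF s i] \<open>u = x s\<close> by simp
          next
            assume "u = grad d (f0 eps Lf m dbar) (x s)" then show ?thesis using G by simp
          next
            assume "u = mv d nA (tr (Amat Lf m1 m2 dbar)) zvec" then show ?thesis by (simp add: mv_zvec lvl_zvec)
          next
            assume "u = mv d nbar (tr (Abar Lf m1 m2 dbar)) zvec" then show ?thesis by (simp add: mv_zvec lvl_zvec)
          next
            assume ue: "u = mv d nA (tr (Amat Lf m1 m2 dbar)) (mv nA d (Amat Lf m1 m2 dbar) (x s))"
            show ?thesis unfolding ue Aeq NA_def
              by (rule kron_TT_lvl[OF finite_McSet i(1)], rule nb, auto simp: m_def)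
          next
            assume ue: "u = mv d nbar (tr (Abar Lf m1 m2 dbar)) (mv nbar d (Abar Lf m1 m2 dbar) (x s))"
            show ?thesis unfolding ue Beq NB_def
              by (rule kron_TT_lvl[OF finite_Mset i(1)], rule nb, auto simp: m_def)
          next
            assume ue: "u = mv d nbar (tr (Abar Lf m1 m2 dbar)) (y s)"
            show ?thesis unfolding ue Beq
            proof (rule kronT_lvl[OF i(1)])
              fix rb assume rb: "1 \<le> rb" "NB rb i \<noteq> 0"
              then have h: "1 \<le> rb \<and> rb \<le> 3 * m2 - 1 \<and> (i = rb * m1 \<or> i = rb * m1 + 1)"
                using Mset_nz[OF m1'] unfolding NB_def by blast
              have "s \<le> Ty K rb" unfolding Ty_def
                using h sT Tf_lip[of i "rb * m1" n K] Tf_lip[of i "rb * m1 + 1" n K] by auto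
              then show "lvl dbar (y s) rb K" using IHy[OF s] h by blast
            qed
          qed
        qed
      qed
      have Y: "lvl dbar (y t) j K" if j: "1 \<le> j" "j \<le> 3 * m2 - 1" and tT: "t \<le> Ty K j" for K j
      proof -
        obtain eta xi p where eta: "0 < eta"
          and xi: "xi \<in> lspan (\<Union>s<t. {zvec, y s,
             mv nbar d (Abar Lf m1 m2 dbar) (mv d nbar (tr (Abar Lf m1 m2 dbar)) (y s)),
             mv nbar d (Abar Lf m1 m2 dbar) (x s)})"
          and pr: "is_prox nbar eta (gbar beta Lf m nbar) xi p"
          and yt: "y t \<in> lspan {xi, p}"
          using ystep[OF t1] by blast
        have jm: "j * m1 + 1 \<le> m" using jm1 j by blast
        have lx: "lvl dbar xi j K"
        proof (rule lspan_lvl[OF xi])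
          fix u assume "u \<in> (\<Union>s<t. {zvec, y s,
             mv nbar d (Abar Lf m1 m2 dbar) (mv d nbar (tr (Abar Lf m1 m2 dbar)) (y s)),
             mv nbar d (Abar Lf m1 m2 dbar) (x s)})"
          then obtain s where s: "s < t" and u: "u \<in> {zvec, y s,
             mv nbar d (Abar Lf m1 m2 dbar) (mv d nbar (tr (Abar Lf m1 m2 dbar)) (y s)),
             mv nbar d (Abar Lf m1 m2 dbar) (x s)}" by blast
          have "s \<le> Ty K j" using s tT by linarith
          then have ly: "lvl dbar (y s) j K" by (rule IHy[OF s j])
          from u show "lvl dbar u j K"
          proof (elim insertE emptyE)
            assume "u = zvec" then show ?thesis by (simp add: lvl_zvec)
          next
            assume "u = y s" then show ?thesis using ly by simp
          next
            assume ue: "u = mv nbar d (Abar Lf m1 m2 dbar) (mv d nbar (tr (Abar Lf m1 m2 dbar)) (y s))"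
            show ?thesis unfolding ue Beq
            proof (rule mv_kron_lvl[OF j(1)])
              fix cb assume cb: "1 \<le> cb" "NB j cb \<noteq> 0"
              have hc: "cb = j * m1 \<or> cb = j * m1 + 1" using Mset_nz[OF m1'] cb(2) unfolding NB_def by blast
              show "lvl dbar (mv d nbar (tr (\<lambda>r c. a * kronI dbar NB r c)) (y s)) cb K"
              proof (rule kronT_lvl[OF cb(1)])
                fix rb assume rb: "1 \<le> rb" "NB rb cb \<noteq> 0"
                have "cb = rb * m1 \<or> cb = rb * m1 + 1" using Mset_nz[OF m1'] rb(2) unfolding NB_def by blast
                then have "rb = j" using blk_unique[OF m1 _ hc] by blast
                then show "lvl dbar (y s) rb K" using ly by simp
              qed
            qed
          next
            assume ue: "u = mv nbar d (Abar Lf m1 m2 dbar) (x s)"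
            show ?thesis unfolding ue Beq
            proof (rule mv_kron_lvl[OF j(1)])
              fix cb assume cb: "1 \<le> cb" "NB j cb \<noteq> 0"
              have hc: "cb = j * m1 \<or> cb = j * m1 + 1" using Mset_nz[OF m1'] cb(2) unfolding NB_def by blast
              have "s \<le> Tf n K cb" using hc s tT unfolding Ty_def by auto
              moreover have "cb \<le> m" using hc jm by auto
              ultimately show "lvl dbar (x s) cb K" using IHx[OF s cb(1)] by blast
            qed
          qed
        qed
        have lp: "lvl dbar p j K" unfolding lvl_def
        proof (intro allI impI)
          fix jj assume jj: "1 \<le> jj \<and> jj \<le> dbar \<and> K < jj"
          have "(j - 1) * dbar + jj \<le> (j - 1) * dbar + dbar" using jj by simp
          also have "\<dots> = j * dbar" using j by (cases j) auto
          also have "\<dots> \<le> nbar" unfolding nbar_def using j by simp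
          finally have le: "(j - 1) * dbar + jj \<le> nbar" .
          have "xi ((j - 1) * dbar + jj) = 0" using lx jj unfolding lvl_def by blast
          then show "p ((j - 1) * dbar + jj) = 0"
            by (intro prox_zero[OF pr eta cnn _ le]) (use jj in auto)
        qed
        show ?thesis by (rule lspan_lvl[OF yt]) (use lx lp in auto)
      qed
      show ?thesis using X Y by blast
    qed
  qed
  show ?thesis
  proof (intro ballI allI impI conjI)
    fix jb t i
    assume jb: "jb \<in> {2..dbar}" and tr: "real t \<le> 1 + real m * (real jb - 2) / 3" and i: "i \<in> {1..m}"
    define K where "K = jb - 1"
    have K1: "1 \<le> K" using jb by (auto simp: K_def)
    have "real m * (real jb - 2) / 3 = real (n * (K - 1))" using jb m3 by (simp add: K_def of_nat_diff)
    then have tn: "t \<le> 1 + n * (K - 1)" using tr by linarith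
    have "t \<le> Tf n K i" using Tf_low[OF K1, of n i] tn by linarith
    then have "lvl dbar (x t) i K" using main[of t] i by auto
    then show "supp (blk dbar (x t) i) \<subseteq> {1..jb - 1}"
      by (auto simp: supp_def blk_def lvl_def K_def not_less)
  next
    fix jb t j
    assume jb: "jb \<in> {2..dbar}" and tr: "real t \<le> 1 + real m * (real jb - 2) / 3" and j: "j \<in> {1..3 * m2 - 1}"
    define K where "K = jb - 1"
    have K1: "1 \<le> K" using jb by (auto simp: K_def)
    have "real m * (real jb - 2) / 3 = real (n * (K - 1))" using jb m3 by (simp add: K_def of_nat_diff)
    then have tn: "t \<le> 1 + n * (K - 1)" using tr by linarith
    have "t \<le> Ty K j" unfolding Ty_def using Tf_low[OF K1, of n] tn by (simp add: le_trans)
    then have "lvl dbar (y t) j K" using main[of t] j by auto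
    then show "supp (blk dbar (y t) j) \<subseteq> {1..jb - 1}"
      by (auto simp: supp_def blk_def lvl_def K_def not_less)
  qed
qed

end
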